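(* Let $A$ be a finite alphabet with at least two letters and let $w\in A^{+}$ be unbordered, i.e. its maximal border is $\varepsilon$: no non-empty word is simultaneously a proper prefix and a proper suffix of $w$. Then for every integer $k\geq 0$ the language $\mathrm{Count}(w,k)$ has generalised star-height $0$, and for all integers $n\geq 2$ and $0\le k<n$ the language $\mathrm{ModCount}(w,k,n)$ has generalised star-height at most $1$.
   Context: A border of a word $w$ is a word that is both a prefix and a suffix of $w$; the maximal border is the longest proper border. Generalised regular expressions over $A$: $\emptyset$, $\varepsilon$ and each letter are expressions; if $E,F$ are expressions so are $E\cup F$, $EF$, $E^{\ast}$, $E^{c}$ (complement in $A^{\ast}$). Star-height: $h(\emptyset)=h(\varepsilon)=h(a)=0$, $h(E\cup F)=h(EF)=\max\{h(E),h(F)\}$, $h(E^{\ast})=h(E)+1$, $h(E^{c})=h(E)$; the star-height of a language is the minimum of $h(E)$ over expressions $E$ representing it. For $w\in A^{+}$ and $v\in A^{\ast}$, $|v|_{w}$ is the number of factorisations $v=xwy$ with $x,y\in A^{\ast}$ (overlapping occurrences counted separately). $\mathrm{Count}(w,k)=\{v\in A^{\ast}:|v|_{w}=k\}$ for $k\ge0$; $\mathrm{ModCount}(w,k,n)=\{v\in A^{\ast}:|v|_{w}\equiv k\pmod n\}$ for $n\ge2$, $0\le k<n$. *)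

theory Defs
  imports Main "HOL-Library.Sublist"
begin

datatype 'a grexp =
    GEmpty
  | GEps
  | GLit 'a
  | GUnion "'a grexp" "'a grexp"
  | GConc "'a grexp" "'a grexp"
  | GStar "'a grexp"
  | GCompl "'a grexp"

definition conc_lang :: "'a list set \<Rightarrow> 'a list set \<Rightarrow> 'a list set" where
  "conc_lang L M = {u @ v | u v. u \<in> L \<and> v \<in> M}"

fun pow_lang :: "'a list set \<Rightarrow> nat \<Rightarrow> 'a list set" where
  "pow_lang L 0 = {[]}"
| "pow_lang L (Suc n) = conc_lang L (pow_lang L n)"

definition star_lang :: "'a list set \<Rightarrow> 'a list set" where
  "star_lang L = (\<Union>n. pow_lang L n)"

fun glang :: "'a grexp \<Rightarrow> 'a list set" where
  "glang GEmpty = {}"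
| "glang GEps = {[]}"
| "glang (GLit a) = {[a]}"
| "glang (GUnion E F) = glang E \<union> glang F"
| "glang (GConc E F) = conc_lang (glang E) (glang F)"
| "glang (GStar E) = star_lang (glang E)"
| "glang (GCompl E) = UNIV - glang E"

fun sheight :: "'a grexp \<Rightarrow> nat" where
  "sheight GEmpty = 0"
| "sheight GEps = 0"
| "sheight (GLit a) = 0"
| "sheight (GUnion E F) = max (sheight E) (sheight F)"
| "sheight (GConc E F) = max (sheight E) (sheight F)"
| "sheight (GStar E) = sheight E + 1"
| "sheight (GCompl E) = sheight E"

definition gen_star_height :: "'a list set \<Rightarrow> nat" where
  "gen_star_height L = (LEAST m. \<exists>E. glang E = L \<and> sheight E = m)"

definition occ :: "'a list \<Rightarrow> 'a list \<Rightarrow> nat" where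
  "occ w v = card {(x, y). v = x @ w @ y}"

definition Count :: "'a list \<Rightarrow> nat \<Rightarrow> 'a list set" where
  "Count w k = {v. occ w v = k}"

definition ModCount :: "'a list \<Rightarrow> nat \<Rightarrow> nat \<Rightarrow> 'a list set" where
  "ModCount w k n = {v. occ w v mod n = k mod n}"

definition unbordered :: "'a list \<Rightarrow> bool" where
  "unbordered w \<longleftrightarrow> \<not> (\<exists>u. u \<noteq> [] \<and> strict_prefix u w \<and> strict_suffix u w)"

end

theory Submission
  imports Defs
begin

lemma occ_fin: "finite {(x, y). v = x @ w @ y}"
proof -
  have "{(x, y). v = x @ w @ y} \<subseteq> set (prefixes v) \<times> set (suffixes v)"
    by (auto simp: prefix_def suffix_def)
  then show ?thesis by (rule finite_subset) auto
qed

lemma occ_Nil: "w \<noteq> [] \<Longrightarrow> occ w [] = 0"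
  unfolding occ_def by simp

lemma occ_Cons:
  assumes "w \<noteq> []"
  shows "occ w (a # v) = (if prefix w (a # v) then 1 else 0) + occ w v"
proof -
  define S where "S = {(x, y). v = x @ w @ y}"
  define T where "T = (if prefix w (a # v) then {([]::'a list, drop (length w) (a # v))} else {})"
  define f where "f = (\<lambda>p::'a list \<times> 'a list. (a # fst p, snd p))"
  have eq: "{(x, y). a # v = x @ w @ y} = T \<union> f ` S"
  proof (rule set_eqI, clarify)
    fix x y
    show "((x, y) \<in> {(x, y). a # v = x @ w @ y}) = ((x, y) \<in> T \<union> f ` S)"
      using assms unfolding T_def S_def f_def
      by (cases x) (auto simp: prefix_def Cons_eq_append_conv image_iff)
  qed
  have disj: "T \<inter> f ` S = {}" unfolding T_def f_def by auto
  have inj: "inj_on f S" unfolding f_def by (auto simp: inj_on_def prod_eq_iff)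
  have f1: "finite T" unfolding T_def by simp
  have f2: "finite (f ` S)" using occ_fin unfolding S_def by blast
  have "card ({(x, y). a # v = x @ w @ y}) = card T + card (f ` S)"
    unfolding eq by (rule card_Un_disjoint[OF f1 f2 disj])
  also have "card (f ` S) = card S" using card_image[OF inj] .
  finally show ?thesis unfolding occ_def S_def T_def by simp
qed

lemma occ_mono_app: "w \<noteq> [] \<Longrightarrow> occ w z \<le> occ w (u @ z)"
  by (induction u) (auto simp: occ_Cons)

lemma occ_skip:
  assumes "w \<noteq> []" "\<forall>i<length u. \<not> prefix w (drop i (u @ z))"
  shows "occ w (u @ z) = occ w z"
  using assms(2)
proof (induction u)
  case Nil then show ?case by simp
next
  case (Cons a u)
  have "\<not> prefix w ((a # u) @ z)" using Cons.prems[rule_format, of 0] by simp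
  moreover have "\<forall>i<length u. \<not> prefix w (drop i (u @ z))"
    using Cons.prems by (metis Suc_mono append_Cons drop_Suc_Cons length_Cons)
  ultimately show ?case using Cons.IH assms(1) by (simp add: occ_Cons)
qed

lemma prefix_app_take:
  assumes "prefix w (X @ r)" "length X \<le> length w"
  shows "take (length X) w = X"
proof -
  obtain z where "X @ r = w @ z" using assms(1) by (auto simp: prefix_def)
  then have "take (length X) (X @ r) = take (length X) (w @ z)" by simp
  then show ?thesis using assms(2) by simp
qed

lemma nooverlap:
  assumes "unbordered w" "prefix w v" "0 < i" "i < length w"
  shows "\<not> prefix w (drop i v)"
proof
  assume p: "prefix w (drop i v)"
  obtain r where v: "v = w @ r" using assms(2) by (auto simp: prefix_def)
  have d: "drop i v = drop i w @ r" using v assms by simp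
  let ?u = "drop i w"
  have e: "take (length ?u) w = ?u"
    using prefix_app_take[of w ?u r] p d by simp
  have ne: "?u \<noteq> []" using assms by simp
  have lt: "length ?u < length w" using assms by simp
  have neq: "?u \<noteq> w" using lt by (metis less_irrefl)
  have sp: "strict_prefix ?u w"
  proof -
    have "prefix ?u w" using e by (metis take_is_prefix)
    moreover note neq
    ultimately show ?thesis by simp
  qed
  have ss: "strict_suffix ?u w"
  proof -
    have "suffix ?u w" by (rule suffix_drop)
    moreover note neq
    ultimately show ?thesis by (simp add: strict_suffix_def)
  qed
  show False using assms(1) ne sp ss unfolding unbordered_def by blast
qed

lemma occ_w_app:
  assumes "unbordered w" "w \<noteq> []"
  shows "occ w (w @ y) = Suc (occ w y)"
proof -
  obtain a t where w: "w = a # t" using assms(2) by (cases w) auto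
  have "\<forall>i<length t. \<not> prefix w (drop i (t @ y))"
  proof (intro allI impI)
    fix i assume "i < length t"
    then have "\<not> prefix w (drop (Suc i) (w @ y))"
      using nooverlap[OF assms(1), of "w @ y" "Suc i"] w by simp
    then show "\<not> prefix w (drop i (t @ y))" using w by simp
  qed
  then have "occ w (t @ y) = occ w y" using occ_skip[OF assms(2)] by blast
  moreover have "occ w (a # t @ y) = 1 + occ w (t @ y)"
    using occ_Cons[OF assms(2), of a "t @ y"] w by simp
  ultimately show ?thesis using w by simp
qed

lemma occ_single:
  assumes "unbordered w" "w \<noteq> []"
  shows "occ w w = 1"
  using occ_w_app[OF assms, of "[]"] occ_Nil[OF assms(2)] by simp

lemma occ_ge_split:
  assumes "unbordered w" "w \<noteq> []"
  shows "Suc k \<le> occ w v \<Longrightarrow> \<exists>x y. v = x @ w @ y \<and> k \<le> occ w y"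
proof (induction v)
  case Nil then show ?case using occ_Nil[OF assms(2)] by simp
next
  case (Cons a v)
  show ?case
  proof (cases "prefix w (a # v)")
    case True
    then obtain y where y: "a # v = w @ y" by (auto simp: prefix_def)
    then have "occ w (a # v) = Suc (occ w y)" using occ_w_app[OF assms] by simp
    then show ?thesis using Cons.prems y by (intro exI[of _ "[]"] exI[of _ y]) auto
  next
    case False
    then have "occ w (a # v) = occ w v" using occ_Cons[OF assms(2)] by simp
    then obtain x y where "v = x @ w @ y" "k \<le> occ w y" using Cons by auto
    then show ?thesis by (intro exI[of _ "a # x"] exI[of _ y]) auto
  qed
qed

lemma occ_ge_conv:
  assumes "unbordered w" "w \<noteq> []"
  shows "Suc (occ w y) \<le> occ w (x @ w @ y)"
  using occ_mono_app[OF assms(2), of "w @ y" x] occ_w_app[OF assms, of y] by simp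

fun Lk :: "'a list \<Rightarrow> nat \<Rightarrow> 'a list set" where
  "Lk w 0 = UNIV"
| "Lk w (Suc k) = {x @ w @ y | x y. y \<in> Lk w k}"

lemma Lk_iff:
  assumes "unbordered w" "w \<noteq> []"
  shows "v \<in> Lk w k \<longleftrightarrow> k \<le> occ w v"
proof (induction k arbitrary: v)
  case 0 then show ?case by simp
next
  case (Suc k)
  show ?case
  proof
    assume "v \<in> Lk w (Suc k)"
    then obtain x y where "v = x @ w @ y" "k \<le> occ w y" using Suc by auto
    then show "Suc k \<le> occ w v" using occ_ge_conv[OF assms, of y x] by simp
  next
    assume "Suc k \<le> occ w v"
    then obtain x y where "v = x @ w @ y" "k \<le> occ w y" using occ_ge_split[OF assms] by blast
    then show "v \<in> Lk w (Suc k)" using Suc by auto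
  qed
qed

definition wexp :: "'a list \<Rightarrow> 'a grexp" where
  "wexp w = foldr (\<lambda>a E. GConc (GLit a) E) w GEps"

lemma wexp_lang: "glang (wexp w) = {w}"
  unfolding wexp_def by (induction w) (auto simp: conc_lang_def)

lemma wexp_h: "sheight (wexp w) = 0"
  unfolding wexp_def by (induction w) auto

abbreviation univ :: "'a grexp" where "univ \<equiv> GCompl GEmpty"

definition ginter :: "'a grexp \<Rightarrow> 'a grexp \<Rightarrow> 'a grexp" where
  "ginter E F = GCompl (GUnion (GCompl E) (GCompl F))"

lemma ginter_lang: "glang (ginter E F) = glang E \<inter> glang F"
  unfolding ginter_def by auto

lemma ginter_h: "sheight (ginter E F) = max (sheight E) (sheight F)"
  unfolding ginter_def by simp

fun Lexp :: "'a list \<Rightarrow> nat \<Rightarrow> 'a grexp" where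
  "Lexp w 0 = univ"
| "Lexp w (Suc k) = GConc univ (GConc (wexp w) (Lexp w k))"

lemma Lexp_lang: "glang (Lexp w k) = Lk w k"
  by (induction k) (auto simp: conc_lang_def wexp_lang)

lemma Lexp_h: "sheight (Lexp w k) = 0"
  by (induction k) (auto simp: wexp_h)

definition Cexp :: "'a list \<Rightarrow> nat \<Rightarrow> 'a grexp" where
  "Cexp w k = ginter (Lexp w k) (GCompl (Lexp w (Suc k)))"

lemma Cexp_h: "sheight (Cexp w k) = 0"
  unfolding Cexp_def by (simp add: ginter_h Lexp_h del: Lexp.simps)

lemma Cexp_lang:
  assumes "unbordered w" "w \<noteq> []"
  shows "glang (Cexp w k) = Count w k"
proof -
  have "glang (Cexp w k) = Lk w k - Lk w (Suc k)"
    unfolding Cexp_def ginter_lang by (simp add: Lexp_lang del: Lexp.simps Lk.simps) blast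
  also have "\<dots> = Count w k" unfolding Count_def
    using Lk_iff[OF assms, of _ k] Lk_iff[OF assms, of _ "Suc k"] by (auto simp del: Lk.simps)
  finally show ?thesis .
qed

lemma gsh_le:
  assumes "glang E = L" "sheight E \<le> m"
  shows "gen_star_height L \<le> m"
proof -
  have "gen_star_height L \<le> sheight E"
    unfolding gen_star_height_def by (rule Least_le) (use assms in blast)
  then show ?thesis using assms by simp
qed

lemma pref_shift:
  assumes "unbordered w" "s \<noteq> []" "prefix w (s @ w @ v)"
  shows "prefix w s"
proof (rule ccontr)
  assume np: "\<not> prefix w s"
  then obtain us where us: "w = s @ us" using assms(3) by (auto simp: prefix_append)
  have "length s < length w"
  proof -
    have "us \<noteq> []" using np us by auto
    then show ?thesis using us by simp
  qed
  then have "\<not> prefix w (drop (length s) (s @ w @ v))"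
    using nooverlap[OF assms(1) assms(3), of "length s"] assms(2) by simp
  then show False by simp
qed

lemma occ_app_w:
  assumes "unbordered w" "w \<noteq> []"
  shows "occ w (u @ w @ v) = occ w (u @ w) + occ w v"
proof (induction u)
  case Nil
  show ?case using occ_w_app[OF assms, of v] occ_single[OF assms] by simp
next
  case (Cons a u)
  have "prefix w ((a # u) @ w @ v) \<longleftrightarrow> prefix w ((a # u) @ w)"
  proof
    assume "prefix w ((a # u) @ w @ v)"
    then have "prefix w (a # u)" using pref_shift[OF assms(1), of "a # u" v] by simp
    then show "prefix w ((a # u) @ w)" by (metis prefix_append)
  next
    assume "prefix w ((a # u) @ w)"
    then show "prefix w ((a # u) @ w @ v)"
      by (metis append_assoc prefix_prefix)
  qed
  then show ?case using Cons occ_Cons[OF assms(2), of a "u @ w @ v"] occ_Cons[OF assms(2), of a "u @ w"]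
    by simp
qed

lemma occ_app_suffix:
  assumes "unbordered w" "w \<noteq> []" "suffix w u"
  shows "occ w (u @ v) = occ w u + occ w v"
  using assms(3) occ_app_w[OF assms(1,2)] by (auto simp: suffix_def)

lemma occ_split:
  assumes "unbordered w" "w \<noteq> []"
  shows "1 \<le> j \<Longrightarrow> j \<le> occ w v \<Longrightarrow>
    \<exists>u z. v = u @ z \<and> suffix w u \<and> occ w u = j \<and> occ w z + j = occ w v"
proof (induction "length v" arbitrary: v j rule: less_induct)
  case less
  show ?case
  proof (cases v)
    case Nil then show ?thesis using less.prems occ_Nil[OF assms(2)] by simp
  next
    case (Cons a v')
    show ?thesis
    proof (cases "prefix w v")
      case True
      then obtain y where y: "v = w @ y" by (auto simp: prefix_def)
      have oy: "occ w v = Suc (occ w y)" using y occ_w_app[OF assms] by simp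
      show ?thesis
      proof (cases "j = 1")
        case True
        then show ?thesis using y oy occ_single[OF assms]
          by (intro exI[of _ w] exI[of _ y]) auto
      next
        case False
        have "length y < length v" using y assms(2) by simp
        moreover have "1 \<le> j - 1" "j - 1 \<le> occ w y" using False less.prems oy by auto
        ultimately obtain u' z where u': "y = u' @ z" "suffix w u'" "occ w u' = j - 1"
            "occ w z + (j - 1) = occ w y"
          using less.hyps by blast
        have "occ w (w @ u') = j" using occ_w_app[OF assms, of u'] u' False less.prems by simp
        moreover have "suffix w (w @ u')" using u'(2) by (auto simp: suffix_def)
        ultimately show ?thesis using y u' oy False less.prems
          by (intro exI[of _ "w @ u'"] exI[of _ z]) auto
      qed
    next
      case False
      then have ov: "occ w v = occ w v'" using Cons occ_Cons[OF assms(2), of a v'] by simp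
      have "length v' < length v" using Cons by simp
      moreover have "1 \<le> j" "j \<le> occ w v'" using less.prems ov by auto
      ultimately obtain u' z where u': "v' = u' @ z" "suffix w u'" "occ w u' = j"
          "occ w z + j = occ w v'"
        using less.hyps[of v' j] by blast
      have np: "\<not> prefix w (a # u')"
        using False Cons u'(1) by (metis append_Cons prefix_prefix)
      have "occ w (a # u') = j" using occ_Cons[OF assms(2), of a u'] np u' by simp
      moreover have "suffix w (a # u')" using u'(2) by (auto simp: suffix_def)
      ultimately show ?thesis using Cons u' ov by (intro exI[of _ "a # u'"] exI[of _ z]) auto
    qed
  qed
qed

lemma pow_occ:
  assumes "unbordered w" "w \<noteq> []"
  shows "u \<in> pow_lang {u. occ w u = n \<and> suffix w u} m \<Longrightarrow>
     occ w u = m * n \<and> (0 < m \<longrightarrow> suffix w u)"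
proof (induction m arbitrary: u)
  case 0
  then have "u = []" by simp
  then show ?case using occ_Nil[OF assms(2)] by simp
next
  case (Suc m)
  have "u \<in> conc_lang {u. occ w u = n \<and> suffix w u} (pow_lang {u. occ w u = n \<and> suffix w u} m)"
    using Suc.prems by simp
  then obtain b p where bp0: "u = b @ p" "b \<in> {u. occ w u = n \<and> suffix w u}"
      "p \<in> pow_lang {u. occ w u = n \<and> suffix w u} m"
    unfolding conc_lang_def by blast
  then have bp: "u = b @ p" "occ w b = n" "suffix w b"
      "p \<in> pow_lang {u. occ w u = n \<and> suffix w u} m" by auto
  have ip: "occ w p = m * n \<and> (0 < m \<longrightarrow> suffix w p)" using Suc.IH[OF bp(4)] .
  have "occ w u = Suc m * n" using bp ip occ_app_suffix[OF assms bp(3), of p] by simp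
  moreover have "suffix w u"
  proof (cases m)
    case 0 then have "p = []" using bp(4) by simp
    then show ?thesis using bp by simp
  next
    case (Suc m')
    then have "suffix w p" using ip by simp
    then show ?thesis unfolding bp(1) by (rule suffix_appendI)
  qed
  ultimately show ?case by simp
qed

lemma ModCount_eq:
  assumes "unbordered w" "w \<noteq> []" "0 < n" "k < n"
  shows "ModCount w k n = conc_lang (star_lang {u. occ w u = n \<and> suffix w u}) (Count w k)"
    (is "_ = conc_lang (star_lang ?B) _")
proof
  show "conc_lang (star_lang ?B) (Count w k) \<subseteq> ModCount w k n"
  proof
    fix v assume "v \<in> conc_lang (star_lang ?B) (Count w k)"
    then obtain p c m where pc: "v = p @ c" "p \<in> pow_lang ?B m" "occ w c = k"
      by (auto simp: conc_lang_def star_lang_def Count_def)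
    have ip: "occ w p = m * n \<and> (0 < m \<longrightarrow> suffix w p)" using pow_occ[OF assms(1,2) pc(2)] .
    have "occ w v = m * n + k"
    proof (cases m)
      case 0 then have "p = []" using pc(2) by simp
      then show ?thesis using pc 0 by simp
    next
      case (Suc m') then show ?thesis using ip pc occ_app_suffix[OF assms(1,2), of p c] by simp
    qed
    then show "v \<in> ModCount w k n" unfolding ModCount_def by simp
  qed
next
  show "ModCount w k n \<subseteq> conc_lang (star_lang ?B) (Count w k)"
  proof
    fix v assume "v \<in> ModCount w k n"
    then have "occ w v mod n = k" using assms by (simp add: ModCount_def)
    then show "v \<in> conc_lang (star_lang ?B) (Count w k)"
    proof (induction "occ w v" arbitrary: v rule: less_induct)
      case less
      show ?case
      proof (cases "occ w v < n")
        case True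
        then have "occ w v = k" using less.prems by simp
        then have "v = [] @ v \<and> [] \<in> star_lang ?B \<and> v \<in> Count w k"
          by (auto simp: star_lang_def Count_def intro: exI[of _ 0])
        then show ?thesis unfolding conc_lang_def by blast
      next
        case False
        then obtain u z where uz: "v = u @ z" "suffix w u" "occ w u = n" "occ w z + n = occ w v"
          using occ_split[OF assms(1,2), of n v] assms(3) by auto
        have "occ w z < occ w v" using uz assms(3) by simp
        moreover have "occ w z mod n = k" using uz less.prems
          by (metis mod_add_self2)
        ultimately have "z \<in> conc_lang (star_lang ?B) (Count w k)" using less.hyps by blast
        then obtain p c m where pc: "z = p @ c" "p \<in> pow_lang ?B m" "c \<in> Count w k"
          by (auto simp: conc_lang_def star_lang_def)
        have "u @ p \<in> pow_lang ?B (Suc m)" using pc uz by (auto simp: conc_lang_def)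
        then have s1: "u @ p \<in> star_lang ?B" unfolding star_lang_def by (rule UN_I[OF UNIV_I])
        have s2: "v = (u @ p) @ c" using pc uz by simp
        have "\<exists>a b. v = a @ b \<and> a \<in> star_lang ?B \<and> b \<in> Count w k"
          by (rule exI[of _ "u @ p"], rule exI[of _ c]) (use s1 s2 pc(3) in simp)
        then show ?thesis by (simp add: conc_lang_def)
      qed
    qed
  qed
qed

theorem lemma2p2:
  fixes w :: "'a::finite list"
  assumes "card (UNIV :: 'a set) \<ge> 2"
    and "w \<noteq> []"
    and "unbordered w"
  shows "(\<forall>k::nat. gen_star_height (Count w k) = 0)
       \<and> (\<forall>n k::nat. 2 \<le> n \<and> k < n \<longrightarrow> gen_star_height (ModCount w k n) \<le> 1)"
proof (intro conjI allI impI)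
  fix k :: nat
  show "gen_star_height (Count w k) = 0"
    using gsh_le[OF Cexp_lang[OF assms(3,2), of k], of 0] Cexp_h[of w k] by simp
next
  fix n k :: nat
  assume nk: "2 \<le> n \<and> k < n"
  define Bexp where "Bexp = ginter (Cexp w n) (GConc univ (wexp w))"
  have sw: "conc_lang (UNIV - {}) {w} = {u. suffix w u}"
    by (auto simp: conc_lang_def suffix_def)
  have bl: "glang Bexp = {u. occ w u = n \<and> suffix w u}"
    unfolding Bexp_def ginter_lang Cexp_lang[OF assms(3,2)] glang.simps wexp_lang sw
    by (auto simp: Count_def)
  have bh: "sheight Bexp = 0" unfolding Bexp_def by (simp add: ginter_h Cexp_h wexp_h)
  have "glang (GConc (GStar Bexp) (Cexp w k)) = conc_lang (star_lang (glang Bexp)) (glang (Cexp w k))"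
    by simp
  also have "\<dots> = conc_lang (star_lang {u. occ w u = n \<and> suffix w u}) (Count w k)"
    unfolding bl Cexp_lang[OF assms(3,2)] ..
  also have "\<dots> = ModCount w k n"
    using ModCount_eq[OF assms(3,2), of n k] nk by simp
  finally have "glang (GConc (GStar Bexp) (Cexp w k)) = ModCount w k n" .
  moreover have "sheight (GConc (GStar Bexp) (Cexp w k)) \<le> 1" using bh Cexp_h[of w k] by simp
  ultimately show "gen_star_height (ModCount w k n) \<le> 1" by (rule gsh_le)
qed

end
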